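(* There exist an alphabet $A$ and words $\mathbf a,\mathbf c\in A^\ast$ such that $\mathbf a:\mathbf a^r::_m\mathbf c:\mathbf c^r$ does not hold in $(A^\ast,\cdot,A^\ast)$.
   Context: The reverse of a word $\mathbf a=a_1\ldots a_n$ is $\mathbf a^r:=a_n\ldots a_1$. $(A^\ast,\cdot,A^\ast)$ is the algebra whose universe is the set $A^\ast$ of all finite words over $A$ (including the empty word), with concatenation and every word as a constant. A justification is a pair of terms $s\to t$ with the variables of $t$ among those of $s$; monolinear justifications are those where $s,t$ contain only one fixed variable $x$, occurring at most once in $s$ and at most once in $t$. $\uparrow^m(\mathbf a\to\mathbf b)$ is the set of monolinear justifications $s\to t$ with $\mathbf a=s(\mathbf o)$, $\mathbf b=t(\mathbf o)$ for some value $\mathbf o$; $\uparrow^m(\mathbf a\to\mathbf b:\!\cdot\,\mathbf c\to\mathbf d):=\uparrow^m(\mathbf a\to\mathbf b)\cap\uparrow^m(\mathbf c\to\mathbf d)$. A monolinear justification is trivial if it lies in all sets $\uparrow^m(\mathbf a'\to\mathbf b':\!\cdot\,\mathbf c'\to\mathbf d')$. $\mathbf a\to\mathbf b:\!\cdot_m\,\mathbf c\to\mathbf d$ holds iff either (i) all justifications in $\uparrow^m(\mathbf a\to\mathbf b)\cup\uparrow^m(\mathbf c\to\mathbf d)$ are trivial, or (ii) $J_{\mathbf d}:=\uparrow^m(\mathbf a\to\mathbf b:\!\cdot\,\mathbf c\to\mathbf d)$ contains a non-trivial justification and for every $\mathbf d'$, $J_{\mathbf d}\subseteq J_{\mathbf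 d'}$ implies $J_{\mathbf d'}$ contains a non-trivial justification and $J_{\mathbf d'}\subseteq J_{\mathbf d}$ (ignoring trivial justifications). $\mathbf a:\mathbf b::_m\mathbf c:\mathbf d$ iff $\mathbf a\to\mathbf b:\!\cdot_m\,\mathbf c\to\mathbf d$, $\mathbf b\to\mathbf a:\!\cdot_m\,\mathbf d\to\mathbf c$, $\mathbf c\to\mathbf d:\!\cdot_m\,\mathbf a\to\mathbf b$, $\mathbf d\to\mathbf c:\!\cdot_m\,\mathbf b\to\mathbf a$ all hold. *)

theory Defs
  imports Main
begin

text \<open>Monolinear terms over the word algebra (A*, concatenation, A*) in the single
variable x, modulo associativity: either a constant word w (x does not occur) or
u x v (x occurs exactly once).\<close>

datatype 'a mterm = MConst "'a list" | MLin "'a list" "'a list"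

fun mev :: "'a mterm \<Rightarrow> 'a list \<Rightarrow> 'a list" where
  "mev (MConst w) o' = w"
| "mev (MLin u v) o' = u @ o' @ v"

fun mterm_over :: "'a set \<Rightarrow> 'a mterm \<Rightarrow> bool" where
  "mterm_over A (MConst w) = (w \<in> lists A)"
| "mterm_over A (MLin u v) = (u \<in> lists A \<and> v \<in> lists A)"

fun has_var :: "'a mterm \<Rightarrow> bool" where
  "has_var (MConst w) = False"
| "has_var (MLin u v) = True"

definition mjust :: "'a set \<Rightarrow> ('a mterm \<times> 'a mterm) set" where
  "mjust A = {(s, t). mterm_over A s \<and> mterm_over A t \<and> (has_var t \<longrightarrow> has_var s)}"

definition Jm :: "'a set \<Rightarrow> 'a list \<Rightarrow> 'a list \<Rightarrow> ('a mterm \<times> 'a mterm) set" where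
  "Jm A a b = {(s, t). (s, t) \<in> mjust A \<and> (\<exists>o'\<in>lists A. a = mev s o' \<and> b = mev t o')}"

definition Jm2 :: "'a set \<Rightarrow> 'a list \<Rightarrow> 'a list \<Rightarrow> 'a list \<Rightarrow> 'a list \<Rightarrow> ('a mterm \<times> 'a mterm) set" where
  "Jm2 A a b c d = Jm A a b \<inter> Jm A c d"

definition trivial_mj :: "'a set \<Rightarrow> 'a mterm \<times> 'a mterm \<Rightarrow> bool" where
  "trivial_mj A j \<longleftrightarrow> j \<in> mjust A \<and>
     (\<forall>a'\<in>lists A. \<forall>b'\<in>lists A. \<forall>c'\<in>lists A. \<forall>d'\<in>lists A. j \<in> Jm2 A a' b' c' d')"

definition nontriv :: "'a set \<Rightarrow> ('a mterm \<times> 'a mterm) set \<Rightarrow> ('a mterm \<times> 'a mterm) set" where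
  "nontriv A S = {j \<in> S. \<not> trivial_mj A j}"

definition marrow :: "'a set \<Rightarrow> 'a list \<Rightarrow> 'a list \<Rightarrow> 'a list \<Rightarrow> 'a list \<Rightarrow> bool" where
  "marrow A a b c d \<longleftrightarrow>
     (\<forall>j \<in> Jm A a b \<union> Jm A c d. trivial_mj A j)
   \<or> (nontriv A (Jm2 A a b c d) \<noteq> {} \<and>
      (\<forall>d'\<in>lists A. nontriv A (Jm2 A a b c d) \<subseteq> nontriv A (Jm2 A a b c d') \<longrightarrow>
          nontriv A (Jm2 A a b c d') \<noteq> {} \<and>
          nontriv A (Jm2 A a b c d') \<subseteq> nontriv A (Jm2 A a b c d)))"

definition mprop :: "'a set \<Rightarrow> 'a list \<Rightarrow> 'a list \<Rightarrow> 'a list \<Rightarrow> 'a list \<Rightarrow> bool" where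
  "mprop A a b c d \<longleftrightarrow> marrow A a b c d \<and> marrow A b a d c \<and> marrow A c d a b \<and> marrow A d c b a"

end

theory Submission imports Defs begin
lemma key:
  assumes "u @ o' @ v = [0::nat,1]" "u @ p @ v = [1,0]"
    "u' @ o' @ v' = [1,0]" "u' @ p @ v' = [0,1]"
  shows False
proof -
  have u: "u = []"
    using assms(1,2) by (cases u) auto
  have "rev v @ rev o' = [1,0]" "rev v @ rev p = [0,1]"
    using assms(1,2) u by (metis rev_append rev.simps append_Nil append_Cons)+
  then have v: "v = []" by (cases "rev v") auto
  have o: "o' = [0,1]" using assms(1) u v by simp
  show False
  proof (cases u')
    case Nil then show ?thesis using assms(3) o by simp
  next
    case (Cons x xs) then show ?thesis using assms(3) o by (cases xs) auto
  qed
qed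
lemma not_triv:
  assumes "(0::nat) \<in> A"
  shows "\<not> trivial_mj A (MConst [0,1], MConst [1,0])"
proof
  assume "trivial_mj A (MConst [0,1], MConst [1,0])"
  then have "(MConst [0,1], MConst [1,0]) \<in> Jm A [] [] "
    unfolding trivial_mj_def Jm2_def by auto
  then show False unfolding Jm_def by auto
qed
lemma J2_empty: "Jm2 A [0::nat,1] [1,0] [1,0] [0,1] = {}"
proof (rule ccontr)
  assume "Jm2 A [0::nat,1] [1,0] [1,0] [0,1] \<noteq> {}"
  then obtain s t where st: "(s,t) \<in> Jm A [0::nat,1] [1,0]" "(s,t) \<in> Jm A [1,0] [0,1]"
    unfolding Jm2_def by auto
  then obtain o' p where op: "[0,1] = mev s o'" "[1,0] = mev t o'"
    "[1,0] = mev s p" "[0,1] = mev t p"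
    unfolding Jm_def by auto
  then have op: "mev s o' = [0,1]" "mev t o' = [1,0]" "mev s p = [1,0]" "mev t p = [0,1]"
    by simp_all
  show False
  proof (cases s)
    case (MConst w) then show ?thesis using op by simp
  next
    case (MLin u v)
    show ?thesis
    proof (cases t)
      case (MConst w) then show ?thesis using op by simp
    next
      case (MLin u' v')
      show ?thesis using key[of u o' v p u' v'] op MLin \<open>s = MLin u v\<close> by simp
    qed
  qed
qed

theorem mainTheorem14:
  shows "\<exists>(A :: nat set) a c. finite A \<and> A \<noteq> {} \<and> a \<in> lists A \<and> c \<in> lists A \<and>
           \<not> mprop A a (rev a) c (rev c)"
proof (intro exI conjI)
  let ?A = "{0::nat,1}"
  show "finite ?A" by simp
  show "?A \<noteq> {}" by simp
  show "[0,1] \<in> lists ?A" by simp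
  show "[1,0] \<in> lists ?A" by simp
  have m: "(MConst [0::nat,1], MConst [1,0]) \<in> Jm ?A [0,1] [1,0]"
    unfolding Jm_def mjust_def by auto
  have "\<not> marrow ?A [0,1] [1,0] [1,0] [0,1]"
    unfolding marrow_def J2_empty nontriv_def
    using m not_triv[of ?A] by blast
  then show "\<not> mprop ?A [0,1] (rev [0,1]) [1,0] (rev [1,0])"
    unfolding mprop_def by simp
qed

end
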